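(* In $\lambda_{\mathrm{ch}}$: if $\Gamma ; \Delta \vdash \mathcal{C}$ with $\Delta = a_1 : A_1, \ldots, a_k : A_k$, then there exists a configuration $\mathcal{C}' \equiv \mathcal{C}$ such that $\mathcal{C}' = (\nu a_{k+1}) \ldots (\nu a_n)(M_1 \parallel \ldots \parallel M_m \parallel a_1(\vec V_1) \parallel \ldots \parallel a_n(\vec V_n))$ for some computations $M_1,\ldots,M_m$ and value sequences $\vec V_1,\ldots,\vec V_n$.
   Context: The calculus $\lambda_{\mathrm{ch}}$. Types $A,B ::= \mathbf{1} \mid A \to B \mid \mathsf{Chan}(A)$; values $V,W ::= \alpha \mid \lambda x.M \mid ()$ ($\alpha$ a variable or a name); computations $M,N ::= V\,W \mid \mathbf{let}\ x \Leftarrow M\ \mathbf{in}\ N \mid \mathbf{return}\ V \mid \mathbf{fork}\ M \mid \mathbf{give}\ V\ W \mid \mathbf{take}\ V \mid \mathbf{newCh}$, with term typing $\Gamma\vdash M:A$ (simple typing of the functional part; $\mathbf{give}\ V\ W:\mathbf 1$ for $V:A$, $W:\mathsf{Chan}(A)$; $\mathbf{take}\ V:A$ for $V:\mathsf{Chan}(A)$; $\mathbf{fork}\ M:\mathbf 1$ for $M:\mathbf 1$; $\mathbf{newCh}:\mathsf{Chan}(A)$). Configurations $\mathcal{C},\mathcal{D} ::= \mathcal{C} \parallel \mathcal{D} \mid (\nu a)\mathcal{C} \mid a(\vec V) \mid M$, where $a(\vec V)$ is a buffer named $a$ holding a (possibly empty) sequence of values. Configuration typing $\Gamma;\Delta\vdash\mathcal{C}$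 ($\Delta$ a linear environment mapping names to types): (Par) $\Gamma;\Delta_1\vdash\mathcal{C}_1$ and $\Gamma;\Delta_2\vdash\mathcal{C}_2$ give $\Gamma;\Delta_1,\Delta_2\vdash\mathcal{C}_1\parallel\mathcal{C}_2$ (disjoint split); (Chan) $\Gamma,a:\mathsf{Chan}(A);\Delta,a:A\vdash\mathcal{C}$ gives $\Gamma;\Delta\vdash(\nu a)\mathcal{C}$; (Buf) $\Gamma\vdash V_i:A$ for all $i$ gives $\Gamma;a:A\vdash a(\vec V)$; (Term) $\Gamma\vdash M:\mathbf 1$ gives $\Gamma;\cdot\vdash M$. Structural congruence $\equiv$: least congruence closed under configuration contexts $G ::= [\,] \mid G\parallel\mathcal{C}\mid(\nu a)G$, with commutativity and associativity of $\parallel$ and scope extrusion $\mathcal{C}\parallel(\nu a)\mathcal{D}\equiv(\nu a)(\mathcal{C}\parallel\mathcal{D})$ if $a\notin\mathsf{fv}(\mathcal{C})$. *)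

theory Defs
  imports Main
begin

type_synonym var = nat
type_synonym name = nat

datatype ty = TUnit | TFun ty ty | TChan ty

datatype atom = AVar var | AName name

datatype val = VAtom atom | VLam var comp | VUnit
and comp = App val val | Let var comp comp | Return val | Fork comp
  | Give val val | Take val | NewCh

datatype conf = Par conf conf | Nu name conf | Buf name "val list" | Term comp

type_synonym tenv = "atom \<Rightarrow> ty option"
type_synonym lenv = "name \<Rightarrow> ty option"

inductive vtyp :: "tenv \<Rightarrow> val \<Rightarrow> ty \<Rightarrow> bool"
and ctyp :: "tenv \<Rightarrow> comp \<Rightarrow> ty \<Rightarrow> bool" where
  T_Atom: "\<Gamma> \<alpha> = Some A \<Longrightarrow> vtyp \<Gamma> (VAtom \<alpha>) A"
| T_Lam: "ctyp (\<Gamma>(AVar x \<mapsto> A)) M B \<Longrightarrow> vtyp \<Gamma> (VLam x M) (TFun A B)"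
| T_Unit: "vtyp \<Gamma> VUnit TUnit"
| T_App: "vtyp \<Gamma> V (TFun A B) \<Longrightarrow> vtyp \<Gamma> W A \<Longrightarrow> ctyp \<Gamma> (App V W) B"
| T_Let: "ctyp \<Gamma> M A \<Longrightarrow> ctyp (\<Gamma>(AVar x \<mapsto> A)) N B \<Longrightarrow> ctyp \<Gamma> (Let x M N) B"
| T_Return: "vtyp \<Gamma> V A \<Longrightarrow> ctyp \<Gamma> (Return V) A"
| T_Fork: "ctyp \<Gamma> M TUnit \<Longrightarrow> ctyp \<Gamma> (Fork M) TUnit"
| T_Give: "vtyp \<Gamma> V A \<Longrightarrow> vtyp \<Gamma> W (TChan A) \<Longrightarrow> ctyp \<Gamma> (Give V W) TUnit"
| T_Take: "vtyp \<Gamma> V (TChan A) \<Longrightarrow> ctyp \<Gamma> (Take V) A"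
| T_NewCh: "ctyp \<Gamma> NewCh (TChan A)"

inductive cfgtyp :: "tenv \<Rightarrow> lenv \<Rightarrow> conf \<Rightarrow> bool" where
  T_Par: "cfgtyp \<Gamma> \<Delta>1 C1 \<Longrightarrow> cfgtyp \<Gamma> \<Delta>2 C2 \<Longrightarrow> dom \<Delta>1 \<inter> dom \<Delta>2 = {}
          \<Longrightarrow> cfgtyp \<Gamma> (\<Delta>1 ++ \<Delta>2) (Par C1 C2)"
| T_Chan: "AName a \<notin> dom \<Gamma> \<Longrightarrow> a \<notin> dom \<Delta> \<Longrightarrow>
           cfgtyp (\<Gamma>(AName a \<mapsto> TChan A)) (\<Delta>(a \<mapsto> A)) C \<Longrightarrow> cfgtyp \<Gamma> \<Delta> (Nu a C)"
| T_Buf: "(\<forall>V \<in> set Vs. vtyp \<Gamma> V A) \<Longrightarrow> cfgtyp \<Gamma> [a \<mapsto> A] (Buf a Vs)"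
| T_Term: "ctyp \<Gamma> M TUnit \<Longrightarrow> cfgtyp \<Gamma> Map.empty (Term M)"

(* names occurring in terms (names are never bound inside terms) *)
fun vnames :: "val \<Rightarrow> name set" and cnames :: "comp \<Rightarrow> name set" where
  "vnames (VAtom (AName a)) = {a}"
| "vnames (VAtom (AVar x)) = {}"
| "vnames (VLam x M) = cnames M"
| "vnames VUnit = {}"
| "cnames (App V W) = vnames V \<union> vnames W"
| "cnames (Let x M N) = cnames M \<union> cnames N"
| "cnames (Return V) = vnames V"
| "cnames (Fork M) = cnames M"
| "cnames (Give V W) = vnames V \<union> vnames W"
| "cnames (Take V) = vnames V"
| "cnames NewCh = {}"

fun fn :: "conf \<Rightarrow> name set" where
  "fn (Par C D) = fn C \<union> fn D"
| "fn (Nu a C) = fn C - {a}"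
| "fn (Buf a Vs) = insert a (\<Union>V \<in> set Vs. vnames V)"
| "fn (Term M) = cnames M"

fun allnames :: "conf \<Rightarrow> name set" where
  "allnames (Par C D) = allnames C \<union> allnames D"
| "allnames (Nu a C) = insert a (allnames C)"
| "allnames (Buf a Vs) = insert a (\<Union>V \<in> set Vs. vnames V)"
| "allnames (Term M) = cnames M"

fun vren :: "name \<Rightarrow> name \<Rightarrow> val \<Rightarrow> val" and cren :: "name \<Rightarrow> name \<Rightarrow> comp \<Rightarrow> comp" where
  "vren a b (VAtom (AName c)) = VAtom (AName (if c = a then b else c))"
| "vren a b (VAtom (AVar x)) = VAtom (AVar x)"
| "vren a b (VLam x M) = VLam x (cren a b M)"
| "vren a b VUnit = VUnit"
| "cren a b (App V W) = App (vren a b V) (vren a b W)"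
| "cren a b (Let x M N) = Let x (cren a b M) (cren a b N)"
| "cren a b (Return V) = Return (vren a b V)"
| "cren a b (Fork M) = Fork (cren a b M)"
| "cren a b (Give V W) = Give (vren a b V) (vren a b W)"
| "cren a b (Take V) = Take (vren a b V)"
| "cren a b NewCh = NewCh"

fun ren :: "name \<Rightarrow> name \<Rightarrow> conf \<Rightarrow> conf" where
  "ren a b (Par C D) = Par (ren a b C) (ren a b D)"
| "ren a b (Nu c C) = (if c = a then Nu c C else Nu c (ren a b C))"
| "ren a b (Buf c Vs) = Buf (if c = a then b else c) (map (vren a b) Vs)"
| "ren a b (Term M) = Term (cren a b M)"

(* structural congruence: least congruence closed under contexts
   G ::= [] | G || C | (nu a) G, with comm/assoc of || and scope extrusion;
   configurations are identified up to alpha-renaming of nu-bound names *)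
inductive scong :: "conf \<Rightarrow> conf \<Rightarrow> bool" (infix "\<equiv>\<^sub>c" 50) where
  SC_refl: "C \<equiv>\<^sub>c C"
| SC_sym: "C \<equiv>\<^sub>c D \<Longrightarrow> D \<equiv>\<^sub>c C"
| SC_trans: "C \<equiv>\<^sub>c D \<Longrightarrow> D \<equiv>\<^sub>c E \<Longrightarrow> C \<equiv>\<^sub>c E"
| SC_par: "C \<equiv>\<^sub>c D \<Longrightarrow> Par C E \<equiv>\<^sub>c Par D E"
| SC_nu: "C \<equiv>\<^sub>c D \<Longrightarrow> Nu a C \<equiv>\<^sub>c Nu a D"
| SC_comm: "Par C D \<equiv>\<^sub>c Par D C"
| SC_assoc: "Par C (Par D E) \<equiv>\<^sub>c Par (Par C D) E"
| SC_extr: "a \<notin> fn C \<Longrightarrow> Par C (Nu a D) \<equiv>\<^sub>c Nu a (Par C D)"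
| SC_alpha: "b \<notin> allnames C \<Longrightarrow> Nu a C \<equiv>\<^sub>c Nu b (ren a b C)"

fun pars :: "conf list \<Rightarrow> conf" where
  "pars [] = undefined"
| "pars [C] = C"
| "pars (C # Cs) = Par C (pars Cs)"

fun nus :: "name list \<Rightarrow> conf \<Rightarrow> conf" where
  "nus [] C = C"
| "nus (b # bs) C = Nu b (nus bs C)"

end

theory Submission
  imports Defs "HOL-Library.Multiset"
begin

lemmas [trans] = SC_trans

lemma scong_parR: "C \<equiv>\<^sub>c D \<Longrightarrow> Par E C \<equiv>\<^sub>c Par E D"
  by (meson SC_comm SC_par SC_trans)

lemma scong_par2: "C \<equiv>\<^sub>c D \<Longrightarrow> E \<equiv>\<^sub>c G \<Longrightarrow> Par C E \<equiv>\<^sub>c Par D G"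
  by (meson SC_par scong_parR SC_trans)

lemma scong_nus: "C \<equiv>\<^sub>c D \<Longrightarrow> nus bs C \<equiv>\<^sub>c nus bs D"
  by (induction bs) (auto intro: SC_nu)

lemma pars_Cons: "xs \<noteq> [] \<Longrightarrow> pars (x # xs) = Par x (pars xs)"
  by (cases xs) auto

lemma pars_append: "xs \<noteq> [] \<Longrightarrow> ys \<noteq> [] \<Longrightarrow> pars (xs @ ys) \<equiv>\<^sub>c Par (pars xs) (pars ys)"
proof (induction xs)
  case Nil then show ?case by simp
next
  case (Cons x xs)
  show ?case
  proof (cases "xs = []")
    case True then show ?thesis using Cons by (simp add: pars_Cons SC_refl)
  next
    case False
    have "pars ((x # xs) @ ys) = Par x (pars (xs @ ys))" using Cons False by (simp add: pars_Cons)
    also have "\<dots> \<equiv>\<^sub>c Par x (Par (pars xs) (pars ys))" using Cons False by (simp add: scong_parR)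
    also have "\<dots> \<equiv>\<^sub>c Par (Par x (pars xs)) (pars ys)" by (rule SC_assoc)
    finally show ?thesis using False by (simp add: pars_Cons)
  qed
qed

lemma pars_move: "pars (ys1 @ x # ys2) \<equiv>\<^sub>c pars (x # ys1 @ ys2)"
proof (cases "ys1 = []")
  case True then show ?thesis by (simp add: SC_refl)
next
  case F1: False
  show ?thesis
  proof (cases "ys2 = []")
    case True
    have "pars (ys1 @ x # ys2) \<equiv>\<^sub>c Par (pars ys1) (pars [x])" using F1 True pars_append[of ys1 "[x]"] by simp
    also have "\<dots> \<equiv>\<^sub>c Par x (pars ys1)" by (simp add: SC_comm)
    finally show ?thesis using F1 True by (simp add: pars_Cons)
  next
    case False
    have "pars (ys1 @ x # ys2) \<equiv>\<^sub>c Par (pars ys1) (pars (x # ys2))" using F1 pars_append[of ys1 "x#ys2"] by simp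
    also have "\<dots> = Par (pars ys1) (Par x (pars ys2))" using False by (simp add: pars_Cons)
    also have "\<dots> \<equiv>\<^sub>c Par (Par (pars ys1) x) (pars ys2)" by (rule SC_assoc)
    also have "\<dots> \<equiv>\<^sub>c Par (Par x (pars ys1)) (pars ys2)" by (rule SC_par, rule SC_comm)
    also have "\<dots> \<equiv>\<^sub>c Par x (Par (pars ys1) (pars ys2))" by (rule SC_sym, rule SC_assoc)
    also have "\<dots> \<equiv>\<^sub>c Par x (pars (ys1 @ ys2))" using F1 False pars_append[of ys1 ys2] by (simp add: scong_parR SC_sym)
    finally show ?thesis using F1 by (simp add: pars_Cons)
  qed
qed

lemma pars_perm: "mset xs = mset ys \<Longrightarrow> xs \<noteq> [] \<Longrightarrow> pars ys \<equiv>\<^sub>c pars xs"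
proof (induction xs arbitrary: ys)
  case Nil then show ?case by simp
next
  case (Cons x xs)
  have "x \<in> set ys" using Cons.prems by (metis list.set_intros(1) set_mset_mset)
  then obtain ys1 ys2 where ys: "ys = ys1 @ x # ys2" by (meson split_list)
  have m: "mset xs = mset (ys1 @ ys2)" using Cons.prems ys by simp
  show ?case
  proof (cases "xs = []")
    case True then show ?thesis using m ys by (simp add: SC_refl)
  next
    case False
    then have ne: "ys1 @ ys2 \<noteq> []" using m by auto
    have "pars ys \<equiv>\<^sub>c pars (x # ys1 @ ys2)" using ys pars_move by simp
    also have "\<dots> = Par x (pars (ys1 @ ys2))" using ne by (simp add: pars_Cons)
    also have "\<dots> \<equiv>\<^sub>c Par x (pars xs)" using Cons.IH[OF m] False m by (simp add: scong_parR)
    finally show ?thesis using False by (simp add: pars_Cons)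
  qed
qed

lemma nus_append: "nus (xs @ ys) C = nus xs (nus ys C)"
  by (induction xs) auto

lemma fn_nus: "fn (nus bs C) = fn C - set bs"
  by (induction bs) auto

lemma allnames_nus: "allnames (nus bs C) = set bs \<union> allnames C"
  by (induction bs) auto

lemma extr_nus: "set bs \<inter> fn C = {} \<Longrightarrow> Par C (nus bs D) \<equiv>\<^sub>c nus bs (Par C D)"
proof (induction bs)
  case Nil then show ?case by (simp add: SC_refl)
next
  case (Cons b bs)
  have "Par C (nus (b # bs) D) \<equiv>\<^sub>c Nu b (Par C (nus bs D))" using Cons.prems by (simp add: SC_extr)
  also have "\<dots> \<equiv>\<^sub>c Nu b (nus bs (Par C D))" using Cons by (simp add: SC_nu)
  finally show ?case by simp
qed

lemma fn_pars: "xs \<noteq> [] \<Longrightarrow> fn (pars xs) = (\<Union>x\<in>set xs. fn x)"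
  by (induction xs rule: pars.induct) auto

lemma allnames_pars: "xs \<noteq> [] \<Longrightarrow> allnames (pars xs) = (\<Union>x\<in>set xs. allnames x)"
  by (induction xs rule: pars.induct) auto

lemma ren_pars: "xs \<noteq> [] \<Longrightarrow> ren a b (pars xs) = pars (map (ren a b) xs)"
  by (induction xs rule: pars.induct) auto

lemma ren_nus: "a \<notin> set bs \<Longrightarrow> ren a b (nus bs C) = nus bs (ren a b C)"
  by (induction bs) auto

lemma fn_allnames: "fn C \<subseteq> allnames C"
  by (induction C) auto

lemma finite_names: "finite (vnames V)" "finite (cnames M)"
  by (induction V and M rule: vnames_cnames.induct) auto

lemma finite_allnames: "finite (allnames C)"
  by (induction C) (auto simp: finite_names)

lemma vren_names: "vnames (vren a b V) \<subseteq> (vnames V - {a}) \<union> {b}"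
  and cren_names: "cnames (cren a b M) \<subseteq> (cnames M - {a}) \<union> {b}"
  by (induction V and M rule: vnames_cnames.induct) auto

lemma dom_fn: "cfgtyp \<Gamma> \<Delta> C \<Longrightarrow> dom \<Delta> \<subseteq> fn C"
  by (induction rule: cfgtyp.induct) auto

lemma dom_finite: "cfgtyp \<Gamma> \<Delta> C \<Longrightarrow> finite (dom \<Delta>)"
proof (induction rule: cfgtyp.induct)
  case (T_Buf Vs \<Gamma> A a)
  show ?case unfolding dom_fun_upd by simp
next
  case (T_Chan a \<Gamma> \<Delta> A C)
  then show ?case unfolding dom_fun_upd by simp
qed auto

definition body :: "comp list \<Rightarrow> (name \<Rightarrow> val list) \<Rightarrow> name list \<Rightarrow> conf list" where
  "body Ms Vs ns = map Term Ms @ map (\<lambda>n. Buf n (Vs n)) ns"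


definition NF :: "lenv \<Rightarrow> conf \<Rightarrow> name set \<Rightarrow> name list \<Rightarrow> comp list \<Rightarrow> (name \<Rightarrow> val list) \<Rightarrow> bool" where
  "NF \<Delta> C F bs Ms Vs \<longleftrightarrow> distinct bs \<and> set bs \<inter> (F \<union> dom \<Delta>) = {} \<and>
     (Ms \<noteq> [] \<or> bs \<noteq> [] \<or> dom \<Delta> \<noteq> {}) \<and>
     (\<forall>M\<in>set Ms. cnames M \<subseteq> fn C \<union> set bs) \<and>
     (\<forall>n\<in>dom \<Delta> \<union> set bs. \<forall>V\<in>set (Vs n). vnames V \<subseteq> fn C \<union> set bs) \<and>
     (\<forall>as. distinct as \<longrightarrow> set as = dom \<Delta> \<longrightarrow> nus bs (pars (body Ms Vs (as @ bs))) \<equiv>\<^sub>c C)"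

lemma NF_D: assumes "NF \<Delta> C F bs Ms Vs"
  shows "distinct bs" "set bs \<inter> (F \<union> dom \<Delta>) = {}" "Ms \<noteq> [] \<or> bs \<noteq> [] \<or> dom \<Delta> \<noteq> {}"
    "\<forall>M\<in>set Ms. cnames M \<subseteq> fn C \<union> set bs"
    "\<forall>n\<in>dom \<Delta> \<union> set bs. \<forall>V\<in>set (Vs n). vnames V \<subseteq> fn C \<union> set bs"
    "\<And>as. distinct as \<Longrightarrow> set as = dom \<Delta> \<Longrightarrow> nus bs (pars (body Ms Vs (as @ bs))) \<equiv>\<^sub>c C"
  using assms unfolding NF_def by blast+

lemma body_ne: "Ms \<noteq> [] \<or> bs \<noteq> [] \<or> D \<noteq> {} \<Longrightarrow> set as = D \<Longrightarrow> body Ms Vs (as @ bs) \<noteq> []"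
  unfolding body_def by auto

lemma fn_body:
  assumes "body Ms Vs ns \<noteq> []" "set ns \<subseteq> D \<union> set bs" "D \<subseteq> fn C"
    "\<forall>M\<in>set Ms. cnames M \<subseteq> fn C \<union> set bs"
    "\<forall>n\<in>D \<union> set bs. \<forall>V\<in>set (Vs n). vnames V \<subseteq> fn C \<union> set bs"
  shows "fn (pars (body Ms Vs ns)) \<subseteq> fn C \<union> set bs"
  using assms by (simp add: fn_pars body_def) (intro conjI ballI subsetI; blast)

lemma allnames_body: "body Ms Vs ns \<noteq> [] \<Longrightarrow> allnames (pars (body Ms Vs ns)) = fn (pars (body Ms Vs ns))"
  by (auto simp: fn_pars allnames_pars body_def)

lemma mset_split: "mset (map f as) = mset (map f (filter P as)) + mset (map f (filter (\<lambda>x. \<not> P x) as))"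
  by (induction as) auto

lemma map2_Buf: "map2 Buf ns (map Vs ns) = map (\<lambda>n. Buf n (Vs n)) ns"
  by (induction ns) auto

lemma main:
  assumes "cfgtyp \<Gamma> \<Delta> C"
  shows "finite F \<Longrightarrow> \<exists>bs Ms Vs. NF \<Delta> C F bs Ms Vs"
  using assms
proof (induction arbitrary: F rule: cfgtyp.induct)
  case (T_Term \<Gamma> M)
  have "NF Map.empty (Term M) F [] [M] (\<lambda>_. [])"
    unfolding NF_def body_def by (auto simp: SC_refl)
  then show ?case by blast
next
  case (T_Buf Vs \<Gamma> A a)
  have d: "dom [a \<mapsto> A] = {a}" unfolding dom_fun_upd by simp
  have "NF [a \<mapsto> A] (Buf a Vs) F [] [] (\<lambda>_. Vs)"
    unfolding NF_def d
  proof (intro conjI allI impI)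
    fix as :: "name list" assume "distinct as" "set as = {a}"
    then have "as = [a]"
      by (cases as) (auto simp: subset_singleton_iff)
    then show "nus [] (pars (body [] (\<lambda>_. Vs) (as @ []))) \<equiv>\<^sub>c Buf a Vs"
      by (simp add: body_def SC_refl)
  qed auto
  then show ?case by blast
next
  case (T_Par \<Gamma> \<Delta>1 C1 \<Delta>2 C2)
  have fd1: "finite (dom \<Delta>1)" and fd2: "finite (dom \<Delta>2)"
    using dom_finite[OF T_Par.hyps(1)] dom_finite[OF T_Par.hyps(2)] .
  have fin1: "finite (F \<union> allnames C2 \<union> dom \<Delta>2)"
    using T_Par.prems fd2 by (simp add: finite_allnames)
  obtain bs1 Ms1 Vs1 where N1: "NF \<Delta>1 C1 (F \<union> allnames C2 \<union> dom \<Delta>2) bs1 Ms1 Vs1"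
    using T_Par.IH(1)[OF fin1] by blast
  note N1d = NF_D(1-5)[OF N1]
  have fin2: "finite (F \<union> set bs1 \<union> allnames C1 \<union> dom \<Delta>1)"
    using T_Par.prems fd1 by (simp add: finite_allnames)
  obtain bs2 Ms2 Vs2 where N2: "NF \<Delta>2 C2 (F \<union> set bs1 \<union> allnames C1 \<union> dom \<Delta>1) bs2 Ms2 Vs2"
    using T_Par.IH(2)[OF fin2] by blast
  note N2d = NF_D(1-5)[OF N2]
  define Vs where "Vs n = (if n \<in> dom \<Delta>1 \<union> set bs1 then Vs1 n else Vs2 n)" for n
  have dm: "dom (\<Delta>1 ++ \<Delta>2) = dom \<Delta>1 \<union> dom \<Delta>2" by auto
  have D1: "dom \<Delta>1 \<subseteq> fn C1" and D2: "dom \<Delta>2 \<subseteq> fn C2" using dom_fn[OF T_Par.hyps(1)] dom_fn[OF T_Par.hyps(2)] by auto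
  have fa1: "fn C1 \<subseteq> allnames C1" and fa2: "fn C2 \<subseteq> allnames C2" by (rule fn_allnames)+
  have "NF (\<Delta>1 ++ \<Delta>2) (Par C1 C2) F (bs1 @ bs2) (Ms1 @ Ms2) Vs"
    unfolding NF_def dm
  proof (intro conjI allI impI)
    show "distinct (bs1 @ bs2)" using N1d(1) N2d(1,2) by auto
    show "set (bs1 @ bs2) \<inter> (F \<union> (dom \<Delta>1 \<union> dom \<Delta>2)) = {}" using N1d(2) N2d(2) by auto
    show "Ms1 @ Ms2 \<noteq> [] \<or> bs1 @ bs2 \<noteq> [] \<or> dom \<Delta>1 \<union> dom \<Delta>2 \<noteq> {}" using N1d(3) by auto
    show "\<forall>M\<in>set (Ms1 @ Ms2). cnames M \<subseteq> fn (Par C1 C2) \<union> set (bs1 @ bs2)" using N1d(4) N2d(4) by auto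
    show "\<forall>n\<in>dom \<Delta>1 \<union> dom \<Delta>2 \<union> set (bs1 @ bs2). \<forall>V\<in>set (Vs n). vnames V \<subseteq> fn (Par C1 C2) \<union> set (bs1 @ bs2)"
    proof (intro ballI)
      fix n V assume n: "n \<in> dom \<Delta>1 \<union> dom \<Delta>2 \<union> set (bs1 @ bs2)" and V: "V \<in> set (Vs n)"
      show "vnames V \<subseteq> fn (Par C1 C2) \<union> set (bs1 @ bs2)"
      proof (cases "n \<in> dom \<Delta>1 \<union> set bs1")
        case True
        then have "V \<in> set (Vs1 n)" using V unfolding Vs_def by simp
        then have "vnames V \<subseteq> fn C1 \<union> set bs1" using N1d(5) True by blast
        then show ?thesis by auto
      next
        case False
        then have "V \<in> set (Vs2 n)" using V unfolding Vs_def by simp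
        moreover have "n \<in> dom \<Delta>2 \<union> set bs2" using n False by auto
        ultimately have "vnames V \<subseteq> fn C2 \<union> set bs2" using N2d(5) by blast
        then show ?thesis by auto
      qed
    qed
  next
    fix as :: "name list" assume as: "distinct as" "set as = dom \<Delta>1 \<union> dom \<Delta>2"
    define as1 where "as1 = filter (\<lambda>n. n \<in> dom \<Delta>1) as"
    define as2 where "as2 = filter (\<lambda>n. \<not> n \<in> dom \<Delta>1) as"
    have as1: "distinct as1" "set as1 = dom \<Delta>1" using as unfolding as1_def by auto
    have as2: "distinct as2" "set as2 = dom \<Delta>2" using as T_Par.hyps(3) unfolding as2_def by auto
    define B1 where "B1 = body Ms1 Vs1 (as1 @ bs1)"
    define B2 where "B2 = body Ms2 Vs2 (as2 @ bs2)"
    have E1: "nus bs1 (pars B1) \<equiv>\<^sub>c C1" using NF_D(6)[OF N1 as1] unfolding B1_def by auto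
    have E2: "nus bs2 (pars B2) \<equiv>\<^sub>c C2" using NF_D(6)[OF N2 as2] unfolding B2_def by auto
    have ne1: "B1 \<noteq> []" using N1d(3) as1 unfolding B1_def by (intro body_ne) auto
    have ne2: "B2 \<noteq> []" using N2d(3) as2 unfolding B2_def by (intro body_ne) auto
    have f1: "fn (pars B1) \<subseteq> fn C1 \<union> set bs1"
      unfolding B1_def apply (rule fn_body[OF _ _ D1]) using ne1 N1d(4,5) as1 unfolding B1_def by auto
    have f2: "fn (pars B2) \<subseteq> fn C2 \<union> set bs2"
      unfolding B2_def apply (rule fn_body[OF _ _ D2]) using ne2 N2d(4,5) as2 unfolding B2_def by auto
    have g1: "set bs1 \<inter> fn (nus bs2 (pars B2)) = {}"
      using f2 fa2 N1d(2) unfolding fn_nus by auto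
    have g2: "set bs2 \<inter> fn (pars B1) = {}"
      using f1 fa1 N2d(2) by auto
    have perm: "mset (B1 @ B2) = mset (body (Ms1 @ Ms2) Vs (as @ bs1 @ bs2))"
    proof -
      let ?f = "\<lambda>n. Buf n (Vs n)"
      have m1: "map (\<lambda>n. Buf n (Vs1 n)) (as1 @ bs1) = map ?f (as1 @ bs1)"
        using as1 unfolding Vs_def by auto
      have m2: "map (\<lambda>n. Buf n (Vs2 n)) (as2 @ bs2) = map ?f (as2 @ bs2)"
        using as2 N1d(2) N2d(2) T_Par.hyps(3) unfolding Vs_def by auto
      have "mset (map ?f as) = mset (map ?f as1) + mset (map ?f as2)"
        unfolding as1_def as2_def by (rule mset_split)
      then show ?thesis unfolding B1_def B2_def body_def m1 m2 by (simp add: ac_simps)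
    qed
    have "Par C1 C2 \<equiv>\<^sub>c Par (nus bs1 (pars B1)) (nus bs2 (pars B2))"
      using E1 E2 by (simp add: scong_par2 SC_sym)
    also have "\<dots> \<equiv>\<^sub>c Par (nus bs2 (pars B2)) (nus bs1 (pars B1))" by (rule SC_comm)
    also have "\<dots> \<equiv>\<^sub>c nus bs1 (Par (nus bs2 (pars B2)) (pars B1))" using g1 by (rule extr_nus)
    also have "\<dots> \<equiv>\<^sub>c nus bs1 (Par (pars B1) (nus bs2 (pars B2)))" by (rule scong_nus, rule SC_comm)
    also have "\<dots> \<equiv>\<^sub>c nus bs1 (nus bs2 (Par (pars B1) (pars B2)))" by (rule scong_nus, rule extr_nus, rule g2)
    also have "\<dots> \<equiv>\<^sub>c nus bs1 (nus bs2 (pars (B1 @ B2)))"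
      by (rule scong_nus, rule scong_nus, rule SC_sym, rule pars_append[OF ne1 ne2])
    also have "\<dots> \<equiv>\<^sub>c nus bs1 (nus bs2 (pars (body (Ms1 @ Ms2) Vs (as @ bs1 @ bs2))))"
    proof (rule scong_nus, rule scong_nus, rule pars_perm[OF perm[symmetric]])
      show "body (Ms1 @ Ms2) Vs (as @ bs1 @ bs2) \<noteq> []"
      proof
        assume "body (Ms1 @ Ms2) Vs (as @ bs1 @ bs2) = []"
        then have "mset (B1 @ B2) = {#}" using perm by simp
        then show False using ne1 by simp
      qed
    qed
    finally show "nus (bs1 @ bs2) (pars (body (Ms1 @ Ms2) Vs (as @ bs1 @ bs2))) \<equiv>\<^sub>c Par C1 C2"
      by (simp add: nus_append SC_sym)
  qed
  then show ?case by blast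
next
  case (T_Chan a \<Gamma> \<Delta> A C0)
  obtain bs0 Ms0 Vs0 where N0: "NF (\<Delta>(a \<mapsto> A)) C0 F bs0 Ms0 Vs0"
    using T_Chan.IH[OF T_Chan.prems] by blast
  note N0d = NF_D(1-5)[OF N0]
  have dm: "dom (\<Delta>(a \<mapsto> A)) = insert a (dom \<Delta>)" unfolding dom_fun_upd by simp
  have aD: "a \<notin> dom \<Delta>" using T_Chan.hyps(2) .
  have "finite (F \<union> dom \<Delta> \<union> allnames C0 \<union> set bs0 \<union> {a})"
    using T_Chan.prems dom_finite[OF T_Chan.hyps(3)] dm by (simp add: finite_allnames)
  then obtain b where b: "b \<notin> F \<union> dom \<Delta> \<union> allnames C0 \<union> set bs0 \<union> {a}"
    using ex_new_if_finite[OF infinite_UNIV_nat, of "F \<union> dom \<Delta> \<union> allnames C0 \<union> set bs0 \<union> {a}"] by blast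
  have D0: "dom (\<Delta>(a \<mapsto> A)) \<subseteq> fn C0" using dom_fn[OF T_Chan.hyps(3)] .
  have fa0: "fn C0 \<subseteq> allnames C0" by (rule fn_allnames)
  have abs0: "a \<notin> set bs0" using N0d(2) dm by auto
  define Vs where "Vs n = map (vren a b) (Vs0 (if n = b then a else n))" for n
  have "NF \<Delta> (Nu a C0) F (b # bs0) (map (cren a b) Ms0) Vs"
    unfolding NF_def
  proof (intro conjI allI impI)
    show "distinct (b # bs0)" using N0d(1) b by auto
    show "set (b # bs0) \<inter> (F \<union> dom \<Delta>) = {}" using N0d(2) b dm by auto
    show "map (cren a b) Ms0 \<noteq> [] \<or> b # bs0 \<noteq> [] \<or> dom \<Delta> \<noteq> {}" by simp
    show "\<forall>M\<in>set (map (cren a b) Ms0). cnames M \<subseteq> fn (Nu a C0) \<union> set (b # bs0)"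
    proof
      fix M assume "M \<in> set (map (cren a b) Ms0)"
      then obtain M0 where "M0 \<in> set Ms0" "M = cren a b M0" by auto
      then show "cnames M \<subseteq> fn (Nu a C0) \<union> set (b # bs0)"
        using cren_names[of a b M0] N0d(4) by auto
    qed
    show "\<forall>n\<in>dom \<Delta> \<union> set (b # bs0). \<forall>V\<in>set (Vs n). vnames V \<subseteq> fn (Nu a C0) \<union> set (b # bs0)"
    proof (intro ballI)
      fix n V assume n: "n \<in> dom \<Delta> \<union> set (b # bs0)" and V: "V \<in> set (Vs n)"
      let ?m = "if n = b then a else n"
      have m: "?m \<in> dom (\<Delta>(a \<mapsto> A)) \<union> set bs0" using n dm by auto
      obtain V0 where V0: "V0 \<in> set (Vs0 ?m)" "V = vren a b V0" using V unfolding Vs_def by auto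
      have "vnames V0 \<subseteq> fn C0 \<union> set bs0" using N0d(5) m V0(1) by blast
      then show "vnames V \<subseteq> fn (Nu a C0) \<union> set (b # bs0)"
        using vren_names[of a b V0] V0(2) by auto
    qed
  next
    fix as :: "name list" assume as: "distinct as" "set as = dom \<Delta>"
    have as0: "distinct (as @ [a])" "set (as @ [a]) = dom (\<Delta>(a \<mapsto> A))" using as aD dm by auto
    define B0 where "B0 = body Ms0 Vs0 ((as @ [a]) @ bs0)"
    have E0: "nus bs0 (pars B0) \<equiv>\<^sub>c C0" using NF_D(6)[OF N0 as0] unfolding B0_def by simp
    have ne0: "B0 \<noteq> []" unfolding B0_def body_def by simp
    have fB: "fn (pars B0) \<subseteq> fn C0 \<union> set bs0"
      unfolding B0_def apply (rule fn_body[OF _ _ D0]) using ne0 N0d(4,5) as0 unfolding B0_def by auto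
    have bn: "b \<notin> allnames (nus bs0 (pars B0))"
      unfolding allnames_nus using allnames_body[of Ms0 Vs0 "(as @ [a]) @ bs0"] ne0 fB fa0 b
      unfolding B0_def by auto
    have bas: "b \<notin> set as" "a \<notin> set as" using b as aD by auto
    have bbs: "b \<notin> set bs0" using b by auto
    have rb: "map (ren a b) B0 = body (map (cren a b) Ms0) Vs (as @ b # bs0)"
      unfolding B0_def body_def Vs_def using bas bbs abs0 b by auto
    have "Nu a C0 \<equiv>\<^sub>c Nu a (nus bs0 (pars B0))" using E0 by (simp add: SC_nu SC_sym)
    also have "\<dots> \<equiv>\<^sub>c Nu b (ren a b (nus bs0 (pars B0)))" using bn by (rule SC_alpha)
    also have "ren a b (nus bs0 (pars B0)) = nus bs0 (pars (body (map (cren a b) Ms0) Vs (as @ b # bs0)))"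
      using abs0 ne0 rb by (simp add: ren_nus ren_pars)
    finally show "nus (b # bs0) (pars (body (map (cren a b) Ms0) Vs (as @ b # bs0))) \<equiv>\<^sub>c Nu a C0"
      by (simp add: SC_sym)
  qed
  then show ?case by blast
qed

theorem lemma6:
  fixes \<Gamma> :: tenv and \<Delta> :: lenv and C :: conf and as :: "name list"
  assumes "cfgtyp \<Gamma> \<Delta> C"
    and "distinct as" and "set as = dom \<Delta>"
  shows "\<exists>C' bs Ms Vss.
           C' \<equiv>\<^sub>c C \<and> distinct (as @ bs) \<and> length Vss = length (as @ bs) \<and>
           map Term Ms @ map2 Buf (as @ bs) Vss \<noteq> [] \<and>
           C' = nus bs (pars (map Term Ms @ map2 Buf (as @ bs) Vss))"
proof -
  obtain bs Ms Vs where N: "NF \<Delta> C {} bs Ms Vs" using main[OF assms(1)] by blast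
  have ne: "body Ms Vs (as @ bs) \<noteq> []" using NF_D(3)[OF N] assms by (intro body_ne) auto
  have E: "nus bs (pars (body Ms Vs (as @ bs))) \<equiv>\<^sub>c C" using NF_D(6)[OF N] assms by blast
  have d: "distinct (as @ bs)" using NF_D(1,2)[OF N] assms by auto
  show ?thesis
    apply (rule exI[of _ "nus bs (pars (body Ms Vs (as @ bs)))"], rule exI[of _ bs], rule exI[of _ Ms],
           rule exI[of _ "map Vs (as @ bs)"])
    using E d ne by (simp add: map2_Buf body_def del: map_append)
qed

end
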